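(* Let $\Gamma$ be a one-dimensional CW-complex and $n\ge1$. Two oriented edges $(e_1,S_1)$ and $(e_2,S_2)$ of $UC_n(\Gamma)$ are dual to the same oriented hyperplane if and only if $e_1=e_2$ and $S_1 \setminus \{ o(e_1)\}$, $S_2 \setminus \{ o(e_2) \}$ belong to the same connected component of $UC_{n-1}(\Gamma \setminus e_1)$.
   Context: $UC_n(\Gamma)$ is the cube complex whose vertices are the $n$-element subsets of the vertex set $\Gamma^{(0)}$, whose edges join $S_1,S_2$ when $S_1\triangle S_2$ is a pair of adjacent vertices, and where $n$ edges at a common vertex span an $n$-cube when the one-cells of $\Gamma$ labelling them are pairwise disjoint (no common endpoint). An oriented edge of $UC_n(\Gamma)$ is determined by a pair $(e,S)$ with $e$ an oriented edge of $\Gamma$ and $S$ an $n$-subset of vertices with $o(e)\in S$, $t(e)\notin S$; it goes from $S$ to $(S\setminus\{o(e)\})\cup\{t(e)\}$. Oriented hyperplanes are equivalence classes of oriented edges under the relation generated by being parallel (and identically oriented) opposite sides of a square. $\Gamma\setminus e$ denotes the subgraph of $\Gamma$ obtained by removing the (closed) edge $e$, i.e. its endpoints and all edges incident to them. *)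

theory Defs
  imports Main
begin

text \<open>A one-dimensional CW-complex (graph, loops and multiple edges allowed) is given by
a vertex set V, a set E of one-cells, and an endpoint map ep :: 'e => 'v * 'v.
An oriented edge of Gamma is a pair (e, b): b = True means orientation from fst (ep e)
to snd (ep e), b = False the reverse.\<close>

definition graph :: "'v set \<Rightarrow> 'e set \<Rightarrow> ('e \<Rightarrow> 'v \<times> 'v) \<Rightarrow> bool" where
  "graph V E ep \<longleftrightarrow> (\<forall>e\<in>E. fst (ep e) \<in> V \<and> snd (ep e) \<in> V)"

definition orig :: "('e \<Rightarrow> 'v \<times> 'v) \<Rightarrow> 'e \<times> bool \<Rightarrow> 'v" where
  "orig ep x = (if snd x then fst (ep (fst x)) else snd (ep (fst x)))"

definition tgt :: "('e \<Rightarrow> 'v \<times> 'v) \<Rightarrow> 'e \<times> bool \<Rightarrow> 'v" where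
  "tgt ep x = (if snd x then snd (ep (fst x)) else fst (ep (fst x)))"

definition ends :: "('e \<Rightarrow> 'v \<times> 'v) \<Rightarrow> 'e \<Rightarrow> 'v set" where
  "ends ep e = {fst (ep e), snd (ep e)}"

text \<open>Gamma minus the closed edge e.\<close>
definition delV :: "'v set \<Rightarrow> ('e \<Rightarrow> 'v \<times> 'v) \<Rightarrow> 'e \<Rightarrow> 'v set" where
  "delV V ep e = V - ends ep e"

definition delE :: "'e set \<Rightarrow> ('e \<Rightarrow> 'v \<times> 'v) \<Rightarrow> 'e \<Rightarrow> 'e set" where
  "delE E ep e = {f \<in> E. ends ep f \<inter> ends ep e = {}}"

definition UC_vert :: "'v set \<Rightarrow> nat \<Rightarrow> 'v set \<Rightarrow> bool" where
  "UC_vert V n S \<longleftrightarrow> S \<subseteq> V \<and> finite S \<and> card S = n"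

definition UC_edge :: "'v set \<Rightarrow> 'e set \<Rightarrow> ('e \<Rightarrow> 'v \<times> 'v) \<Rightarrow> nat \<Rightarrow> ('e \<times> bool) \<times> 'v set \<Rightarrow> bool" where
  "UC_edge V E ep n xS \<longleftrightarrow> fst (fst xS) \<in> E \<and> UC_vert V n (snd xS)
      \<and> orig ep (fst xS) \<in> snd xS \<and> tgt ep (fst xS) \<notin> snd xS"

definition move :: "('e \<Rightarrow> 'v \<times> 'v) \<Rightarrow> 'e \<times> bool \<Rightarrow> 'v set \<Rightarrow> 'v set" where
  "move ep x S = insert (tgt ep x) (S - {orig ep x})"

text \<open>(x, S) and (x, S') are identically oriented opposite sides of a square:
the square at corner S spanned by the edges (x,S) and (phi,S) with disjoint labelling cells.\<close>
definition parallel :: "'v set \<Rightarrow> 'e set \<Rightarrow> ('e \<Rightarrow> 'v \<times> 'v) \<Rightarrow> nat \<Rightarrow>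
    ('e \<times> bool) \<times> 'v set \<Rightarrow> ('e \<times> bool) \<times> 'v set \<Rightarrow> bool" where
  "parallel V E ep n a b \<longleftrightarrow> UC_edge V E ep n a \<and> fst a = fst b \<and>
     (\<exists>phi. UC_edge V E ep n (phi, snd a) \<and> ends ep (fst phi) \<inter> ends ep (fst (fst a)) = {}
            \<and> snd b = move ep phi (snd a))"

definition same_hyp :: "'v set \<Rightarrow> 'e set \<Rightarrow> ('e \<Rightarrow> 'v \<times> 'v) \<Rightarrow> nat \<Rightarrow>
    ('e \<times> bool) \<times> 'v set \<Rightarrow> ('e \<times> bool) \<times> 'v set \<Rightarrow> bool" where
  "same_hyp V E ep n = equivclp (parallel V E ep n)"

definition UC_adj :: "'v set \<Rightarrow> 'e set \<Rightarrow> ('e \<Rightarrow> 'v \<times> 'v) \<Rightarrow> nat \<Rightarrow> 'v set \<Rightarrow> 'v set \<Rightarrow> bool" where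
  "UC_adj V E ep n S T \<longleftrightarrow> (\<exists>phi. UC_edge V E ep n (phi, S) \<and> T = move ep phi S)"

definition same_comp :: "'v set \<Rightarrow> 'e set \<Rightarrow> ('e \<Rightarrow> 'v \<times> 'v) \<Rightarrow> nat \<Rightarrow> 'v set \<Rightarrow> 'v set \<Rightarrow> bool" where
  "same_comp V E ep n S T \<longleftrightarrow> UC_vert V n S \<and> UC_vert V n T \<and> (UC_adj V E ep n)\<^sup>*\<^sup>* S T"

end

theory Submission
  imports Defs
begin

lemma ends_eq: "ends ep (fst x) = {orig ep x, tgt ep x}"
  by (auto simp: ends_def orig_def tgt_def)

lemma edge_basic:
  assumes "graph V E ep" "UC_edge V E ep n (x, S)"
  shows "orig ep x \<noteq> tgt ep x" "orig ep x \<in> V" "tgt ep x \<in> V" "fst x \<in> E"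
    "orig ep x \<in> S" "tgt ep x \<notin> S" "S \<subseteq> V" "finite S" "card S = n"
  using assms by (auto simp: UC_edge_def UC_vert_def graph_def orig_def tgt_def split: if_splits)

lemma graph_del: "graph V E ep \<Longrightarrow> graph (delV V ep e) (delE E ep e) ep"
  by (auto simp: graph_def delV_def delE_def ends_def)

lemma move_vert:
  assumes "graph V E ep" "UC_edge V E ep n (phi, S)"
  shows "UC_vert V n (move ep phi S)"
proof -
  note b = edge_basic[OF assms]
  have "n \<noteq> 0" using b card_gt_0_iff by blast
  then have "card (move ep phi S) = n"
    using b by (simp add: move_def card_insert_if)
  then show ?thesis using b by (auto simp: UC_vert_def move_def)
qed

lemma adj_vert: "graph V E ep \<Longrightarrow> UC_adj V E ep n S T \<Longrightarrow> UC_vert V n T"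
  using move_vert unfolding UC_adj_def by blast

lemma adj_sym:
  assumes "graph V E ep" "UC_adj V E ep n S T"
  shows "UC_adj V E ep n T S"
proof -
  obtain phi where p: "UC_edge V E ep n (phi, S)" "T = move ep phi S"
    using assms(2) by (auto simp: UC_adj_def)
  note b = edge_basic[OF assms(1) p(1)]
  define psi where "psi = (fst phi, \<not> snd phi)"
  have o: "orig ep psi = tgt ep phi" and t: "tgt ep psi = orig ep phi"
    by (auto simp: psi_def orig_def tgt_def)
  have f: "fst psi = fst phi" by (simp add: psi_def)
  have "UC_edge V E ep n (psi, T)"
    using move_vert[OF assms(1) p(1)] b p(2)
    by (auto simp: UC_edge_def o t f move_def)
  moreover have "S = move ep psi T"
    using b p(2) by (auto simp: move_def o t)
  ultimately show ?thesis unfolding UC_adj_def by blast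
qed

lemma edge_vert_del:
  assumes "graph V E ep" "UC_edge V E ep n (x, S)"
  shows "UC_vert (delV V ep (fst x)) (n - 1) (S - {orig ep x})"
  using edge_basic[OF assms] by (auto simp: UC_vert_def delV_def ends_eq)

lemma par_step:
  assumes "graph V E ep" "parallel V E ep n a b"
  shows "fst b = fst a \<and> UC_edge V E ep n a \<and> UC_edge V E ep n b \<and>
    UC_adj (delV V ep (fst (fst a))) (delE E ep (fst (fst a))) ep (n - 1)
       (snd a - {orig ep (fst a)}) (snd b - {orig ep (fst a)})"
proof -
  obtain x S where a: "a = (x, S)" by (cases a)
  obtain phi where p: "UC_edge V E ep n (x, S)" "fst b = x" "UC_edge V E ep n (phi, S)"
    "ends ep (fst phi) \<inter> ends ep (fst x) = {}" "snd b = move ep phi S"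
  proof -
    from assms(2) have "UC_edge V E ep n a \<and> fst a = fst b \<and>
     (\<exists>phi. UC_edge V E ep n (phi, snd a) \<and> ends ep (fst phi) \<inter> ends ep (fst (fst a)) = {}
            \<and> snd b = move ep phi (snd a))" unfolding parallel_def .
    then show ?thesis using that unfolding a fst_conv snd_conv by blast
  qed
  note bx = edge_basic[OF assms(1) p(1)]
  note bp = edge_basic[OF assms(1) p(3)]
  have d: "orig ep phi \<noteq> orig ep x" "orig ep phi \<noteq> tgt ep x" "tgt ep phi \<noteq> orig ep x"
    "tgt ep phi \<noteq> tgt ep x"
  proof -
    have "{orig ep phi, tgt ep phi} \<inter> {orig ep x, tgt ep x} = {}"
      using p(4) by (simp only: ends_eq)
    then show "orig ep phi \<noteq> orig ep x" "orig ep phi \<noteq> tgt ep x" "tgt ep phi \<noteq> orig ep x"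
      "tgt ep phi \<noteq> tgt ep x" by blast+
  qed
  obtain y T where bb: "b = (y, T)" by (cases b)
  have yx: "y = x" "T = move ep phi S" using p(2,5) bb by auto
  have eb: "UC_edge V E ep n b"
    unfolding bb yx UC_edge_def using move_vert[OF assms(1) p(3)] p(1) d
    by (simp add: UC_edge_def move_def)
  have "UC_edge (delV V ep (fst x)) (delE E ep (fst x)) ep (n - 1) (phi, S - {orig ep x})"
    unfolding UC_edge_def using edge_vert_del[OF assms(1) p(1)] bp(1,4,5,6) p(4) d
    by (simp add: delE_def)
  moreover have "snd b - {orig ep x} = move ep phi (S - {orig ep x})"
    using p(5) d by (auto simp: move_def)
  ultimately have "UC_adj (delV V ep (fst x)) (delE E ep (fst x)) ep (n - 1) (S - {orig ep x}) (snd b - {orig ep x})"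
    unfolding UC_adj_def by blast
  then show ?thesis using p eb a by simp
qed

lemma forward:
  assumes g: "graph V E ep" and r: "equivclp (parallel V E ep n) a b" and ea: "UC_edge V E ep n a"
  shows "fst b = fst a \<and> UC_edge V E ep n b \<and>
    (UC_adj (delV V ep (fst (fst a))) (delE E ep (fst (fst a))) ep (n - 1))\<^sup>*\<^sup>*
       (snd a - {orig ep (fst a)}) (snd b - {orig ep (fst a)})"
  using r[unfolded equivclp_def]
proof (induction rule: rtranclp_induct)
  case base
  then show ?case using ea by auto
next
  case (step y z)
  from step.hyps(2) consider "parallel V E ep n y z" | "parallel V E ep n z y"
    by (auto simp: symclp_def)
  then show ?case
  proof cases
    case 1
    note s = par_step[OF g 1]
    then show ?thesis using step.IH
      by (metis (no_types, lifting) rtranclp.rtrancl_into_rtrancl)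
  next
    case 2
    note s = par_step[OF g 2]
    have "UC_adj (delV V ep (fst (fst a))) (delE E ep (fst (fst a))) ep (n - 1)
       (snd y - {orig ep (fst a)}) (snd z - {orig ep (fst a)})"
      using adj_sym[OF graph_del[OF g]] s step.IH by metis
    then show ?thesis using step.IH s
      by (metis (no_types, lifting) rtranclp.rtrancl_into_rtrancl)
  qed
qed

lemma backward:
  assumes g: "graph V E ep" and n: "n \<ge> 1" and e1: "UC_edge V E ep n (x, S1)"
    and r: "(UC_adj (delV V ep (fst x)) (delE E ep (fst x)) ep (n - 1))\<^sup>*\<^sup>* (S1 - {orig ep x}) T"
  shows "(parallel V E ep n)\<^sup>*\<^sup>* (x, S1) (x, insert (orig ep x) T)"
  using r
proof (induction rule: rtranclp_induct)
  case base
  have "insert (orig ep x) (S1 - {orig ep x}) = S1" using edge_basic[OF g e1] by auto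
  then show ?case by simp
next
  case (step T T')
  note bx = edge_basic[OF g e1]
  have gd: "graph (delV V ep (fst x)) (delE E ep (fst x)) ep" using graph_del[OF g] .
  have vT: "UC_vert (delV V ep (fst x)) (n - 1) T"
  proof (cases "T = S1 - {orig ep x}")
    case True then show ?thesis using edge_vert_del[OF g e1] by simp
  next
    case False
    then obtain U where "(UC_adj (delV V ep (fst x)) (delE E ep (fst x)) ep (n - 1))\<^sup>*\<^sup>* (S1 - {orig ep x}) U"
      "UC_adj (delV V ep (fst x)) (delE E ep (fst x)) ep (n - 1) U T"
      using step.hyps(1) by (metis rtranclp.cases)
    then show ?thesis using adj_vert[OF gd] by blast
  qed
  obtain phi where p: "UC_edge (delV V ep (fst x)) (delE E ep (fst x)) ep (n - 1) (phi, T)"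
    "T' = move ep phi T" using step.hyps(2) by (auto simp: UC_adj_def)
  note bp = edge_basic[OF gd p(1)]
  have dis: "ends ep (fst phi) \<inter> ends ep (fst x) = {}" using bp(4) by (auto simp: delE_def)
  have d: "orig ep phi \<noteq> orig ep x" "orig ep phi \<noteq> tgt ep x" "tgt ep phi \<noteq> orig ep x"
    "tgt ep phi \<noteq> tgt ep x"
  proof -
    have "{orig ep phi, tgt ep phi} \<inter> {orig ep x, tgt ep x} = {}"
      using dis by (simp only: ends_eq)
    then show "orig ep phi \<noteq> orig ep x" "orig ep phi \<noteq> tgt ep x" "tgt ep phi \<noteq> orig ep x"
      "tgt ep phi \<noteq> tgt ep x" by blast+
  qed
  have oT: "orig ep x \<notin> T" "tgt ep x \<notin> T" using vT by (auto simp: UC_vert_def delV_def ends_eq)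
  have cT: "card (insert (orig ep x) T) = n" using vT oT n by (auto simp: UC_vert_def)
  have TV: "T \<subseteq> V" using vT by (auto simp: UC_vert_def delV_def)
  have e: "UC_edge V E ep n (x, insert (orig ep x) T)"
    using bx cT TV oT vT by (auto simp: UC_edge_def UC_vert_def)
  have ep: "UC_edge V E ep n (phi, insert (orig ep x) T)"
    using e bp d dis by (auto simp: UC_edge_def delE_def UC_vert_def)
  have "insert (orig ep x) T' = move ep phi (insert (orig ep x) T)"
    using p(2) d by (auto simp: move_def)
  then have "parallel V E ep n (x, insert (orig ep x) T) (x, insert (orig ep x) T')"
    unfolding parallel_def fst_conv snd_conv using e ep dis by blast
  with step.IH show ?case by (rule rtranclp.rtrancl_into_rtrancl)
qed

theorem lemma3p6:
  fixes V :: "'v set" and E :: "'e set" and ep :: "'e \<Rightarrow> 'v \<times> 'v" and n :: nat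
    and x1 x2 :: "'e \<times> bool" and S1 S2 :: "'v set"
  assumes "graph V E ep" and "n \<ge> 1"
    and "UC_edge V E ep n (x1, S1)" and "UC_edge V E ep n (x2, S2)"
  shows "same_hyp V E ep n (x1, S1) (x2, S2) \<longleftrightarrow>
           x1 = x2 \<and> same_comp (delV V ep (fst x1)) (delE E ep (fst x1)) ep (n - 1)
                        (S1 - {orig ep x1}) (S2 - {orig ep x2})"
proof
  assume h: "same_hyp V E ep n (x1, S1) (x2, S2)"
  note f = forward[OF assms(1) h[unfolded same_hyp_def] assms(3)]
  then have "x1 = x2" by simp
  then show "x1 = x2 \<and> same_comp (delV V ep (fst x1)) (delE E ep (fst x1)) ep (n - 1)
                        (S1 - {orig ep x1}) (S2 - {orig ep x2})"
    using f edge_vert_del[OF assms(1) assms(3)] edge_vert_del[OF assms(1) assms(4)]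
    by (simp add: same_comp_def)
next
  assume h: "x1 = x2 \<and> same_comp (delV V ep (fst x1)) (delE E ep (fst x1)) ep (n - 1)
                        (S1 - {orig ep x1}) (S2 - {orig ep x2})"
  then have "(UC_adj (delV V ep (fst x1)) (delE E ep (fst x1)) ep (n - 1))\<^sup>*\<^sup>* (S1 - {orig ep x1}) (S2 - {orig ep x1})"
    unfolding same_comp_def by (metis (no_types))
  note backward[OF assms(1,2,3) this]
  moreover have "insert (orig ep x1) (S2 - {orig ep x1}) = S2"
    using edge_basic[OF assms(1) assms(4)] h by auto
  ultimately show "same_hyp V E ep n (x1, S1) (x2, S2)"
    using h rtranlcp_le_equivclp unfolding same_hyp_def by (metis predicate2D)
qed

end
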